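(* For every positive integer $s$, $$\sum_{n\ge0}z^n\sum_{j=0}^{n+1}(-1)^{n+1-j}\binom{2n+1}{n+1-j}j^{2s}=\frac12\left(1+\sqrt{1+4z}\right)\left(1+p_s(z)\right)$$ as formal power series, where $p_s(z)$ is a polynomial in $z$ with integer coefficients, all of which are divisible by $3$, and $p_s(0)=0$.
   Context: $\sqrt{1+4z}$ denotes the formal power series square root with constant term $1$. *)

theory Defs
  imports "HOL-Computational_Algebra.Computational_Algebra"
begin

text \<open>The formal power series square root of 1+4z with constant term 1,
  via the library's formal radical (root function choosing constant term 1).\<close>
definition sqrt_1p4z :: "rat fps" where
  "sqrt_1p4z = fps_radical (\<lambda>_ _. 1) 2 (1 + 4 * fps_X)"

end

theory Submission
  imports Defs
begin


definition S :: "nat \<Rightarrow> nat \<Rightarrow> (rat \<Rightarrow> rat) \<Rightarrow> rat" where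
  "S a r f = (\<Sum>m\<le>r. (-1)^m * of_nat (a choose m) * f (of_nat r - of_nat m))"

lemma S_shift: "S a (Suc r) f = S a r (\<lambda>x. f (x+1)) + (-1)^(Suc r) * of_nat (a choose Suc r) * f 0"
  unfolding S_def by (simp add: algebra_simps)

lemma S_pascal: "S (Suc a) (Suc r) f = S a (Suc r) f - S a r f"
proof -
  have "S (Suc a) (Suc r) f = f (of_nat (Suc r)) +
     (\<Sum>m\<le>r. (-1)^Suc m * of_nat (a choose Suc m) * f (of_nat r - of_nat m))
   + (\<Sum>m\<le>r. (-1)^Suc m * of_nat (a choose m) * f (of_nat r - of_nat m))"
    unfolding S_def by (subst sum.atMost_Suc_shift) (simp add: algebra_simps sum.distrib[symmetric])
  also have "f (of_nat (Suc r)) +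
     (\<Sum>m\<le>r. (-1)^Suc m * of_nat (a choose Suc m) * f (of_nat r - of_nat m)) = S a (Suc r) f"
    unfolding S_def by (subst sum.atMost_Suc_shift) simp
  also have "(\<Sum>m\<le>r. (-1)^Suc m * of_nat (a choose m) * f (of_nat r - of_nat m)) = - S a r f"
    unfolding S_def by (simp add: sum_negf[symmetric])
  finally show ?thesis by simp
qed

lemma S_add: "S a r (\<lambda>x. f x + g x) = S a r f + S a r g"
  unfolding S_def by (simp add: algebra_simps sum.distrib)
lemma S_diff: "S a r (\<lambda>x. f x - g x) = S a r f - S a r g"
  unfolding S_def by (simp add: algebra_simps sum_subtractf)
lemma S_cmult: "S a r (\<lambda>x. c * f x) = c * S a r f"
  unfolding S_def by (simp add: algebra_simps sum_distrib_left)
lemma S_sum: "finite K \<Longrightarrow> S a r (\<lambda>x. \<Sum>k\<in>K. c k * g k x) = (\<Sum>k\<in>K. c k * S a r (g k))"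
  unfolding S_def sum_distrib_left by (subst sum.swap) (simp add: algebra_simps)

lemma S_rec:
  assumes "f 0 = 0"
  shows "S (2*N+3) (N+2) f = S (2*N+1) (N+1) (\<lambda>x. f (x+1) - 2 * f x + f (x-1))
     - (-1)^(N+1) * of_nat ((2*N+1) choose (N+1)) * f (-1)"
proof -
  have p: "S (2*N+3) (N+2) f = S (2*N+1) (N+2) f - 2 * S (2*N+1) (N+1) f + S (2*N+1) N f"
    using S_pascal[of "Suc (2*N+1)" "Suc N" f] S_pascal[of "2*N+1" "Suc N" f] S_pascal[of "2*N+1" N f]
    by (simp add: numeral_3_eq_3 algebra_simps)
  have a: "S (2*N+1) (N+2) f = S (2*N+1) (N+1) (\<lambda>x. f (x+1))"
    using S_shift[of "2*N+1" "N+1" f] assms by simp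
  have b: "S (2*N+1) (N+1) (\<lambda>x. f (x-1)) = S (2*N+1) N f + (-1)^(N+1) * of_nat ((2*N+1) choose (N+1)) * f (-1)"
    using S_shift[of "2*N+1" N "\<lambda>x. f (x-1)"] by simp
  have c: "S (2*N+1) (N+1) (\<lambda>x. f (x+1) - 2 * f x + f (x-1)) =
      S (2*N+1) (N+1) (\<lambda>x. f (x+1)) - 2 * S (2*N+1) (N+1) f + S (2*N+1) (N+1) (\<lambda>x. f (x-1))"
    by (simp add: S_add S_diff S_cmult)
  show ?thesis using p a b c by simp
qed

lemma S_const: "S (Suc a) r (\<lambda>x. c) = c * (-1)^r * of_nat (a choose r)"
proof (induction r)
  case 0 then show ?case by (simp add: S_def)
next
  case (Suc r)
  have "S (Suc a) (Suc r) (\<lambda>x. c) = S (Suc a) r (\<lambda>x. c) + (-1)^(Suc r) * of_nat (Suc a choose Suc r) * c"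
    using S_shift[of "Suc a" r "\<lambda>x. c"] by simp
  then show ?case using Suc by (simp add: algebra_simps)
qed

definition Q :: "nat \<Rightarrow> rat \<Rightarrow> rat" where
  "Q k x = x * pochhammer (x - of_nat k) (2*k+1) / (of_nat (k+1) * fact (2*k+1))"



lemma Q_0: "Q k 0 = 0" by (simp add: Q_def)
lemma Q0: "Q 0 x = x^2" by (simp add: Q_def power2_eq_square)

lemma poch_zero: "k < n \<Longrightarrow> pochhammer (- of_nat k :: rat) n = 0"
  by (simp add: pochhammer_of_nat_eq_0_iff)

lemma Q_Suc_m1: "Q (Suc k) (-1) = 0"
proof -
  have "pochhammer (-1 - of_nat (Suc k) :: rat) (2*Suc k+1) = pochhammer (- of_nat (Suc (Suc k))) (2*Suc k+1)"
    by (simp add: algebra_simps)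
  also have "\<dots> = 0" by (rule poch_zero) simp
  finally show ?thesis by (simp add: Q_def)
qed

lemma Q_Suc_1: "Q (Suc k) 1 = 0"
proof -
  have "pochhammer (1 - of_nat (Suc k) :: rat) (2*Suc k+1) = pochhammer (- of_nat k) (2*Suc k+1)"
    by (simp add: algebra_simps)
  also have "\<dots> = 0" by (rule poch_zero) simp
  finally show ?thesis by (simp add: Q_def)
qed

lemma Q0_m1: "Q 0 (-1) = 1" by (simp add: Q0)
lemma Q0_1: "Q 0 1 = 1" by (simp add: Q0)

lemma poch_facts:
  fixes x :: rat and k :: nat
  defines "M \<equiv> pochhammer (x - of_nat k) (2*k+1)"
  shows "pochhammer (x - of_nat (Suc k)) (2*Suc k+1) = (x - of_nat k - 1) * (x + of_nat k + 1) * M"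
    and "pochhammer (x + 1 - of_nat (Suc k)) (2*Suc k+1) = (x + of_nat k + 1) * (x + of_nat k + 2) * M"
    and "pochhammer (x - 1 - of_nat (Suc k)) (2*Suc k+1) = (x - of_nat k - 2) * (x - of_nat k - 1) * M"
proof -
  have e: "2*Suc k+1 = Suc (Suc (2*k+1))" by simp
  show "pochhammer (x - of_nat (Suc k)) (2*Suc k+1) = (x - of_nat k - 1) * (x + of_nat k + 1) * M"
    unfolding e pochhammer_rec[of _ "Suc (2*k+1)"] pochhammer_rec'[of _ "2*k+1"] M_def
    by (simp add: algebra_simps)
  show "pochhammer (x + 1 - of_nat (Suc k)) (2*Suc k+1) = (x + of_nat k + 1) * (x + of_nat k + 2) * M"
    unfolding e pochhammer_rec'[of _ "Suc (2*k+1)"] pochhammer_rec'[of _ "2*k+1"] M_def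
    by (simp add: algebra_simps)
  show "pochhammer (x - 1 - of_nat (Suc k)) (2*Suc k+1) = (x - of_nat k - 2) * (x - of_nat k - 1) * M"
    unfolding e pochhammer_rec[of _ "Suc (2*k+1)"] pochhammer_rec[of _ "2*k+1"] M_def
    by (simp add: algebra_simps)
qed

lemma fact_ss: "fact (2*Suc k+1) = (of_nat (2*k+3) * of_nat (2*k+2) * fact (2*k+1) :: rat)"
proof -
  have e: "2*Suc k+1 = Suc (Suc (2*k+1))" by simp
  show ?thesis unfolding e by (simp add: algebra_simps)
qed

lemma Q_delta_alg:
  fixes K F M x :: rat assumes "K \<ge> 0" "F \<noteq> 0"
  shows "(x+1) * ((x + K + 1) * (x + K + 2) * M) / ((K+2) * ((2*K+3) * (2*K+2) * F))
     - 2 * (x * ((x - K - 1) * (x + K + 1) * M) / ((K+2) * ((2*K+3) * (2*K+2) * F)))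
     + (x-1) * ((x - K - 2) * (x - K - 1) * M) / ((K+2) * ((2*K+3) * (2*K+2) * F))
     = x * M / ((K+1) * F)"
proof -
  have a: "K+1 \<noteq> 0" "K+2 \<noteq> 0" "2*K+3 \<noteq> 0" using assms by auto
  have d: "(K+2) * ((2*K+3) * (2*K+2) * F) = (2*(K+2)*(2*K+3)) * ((K+1)*F)" by (simp add: algebra_simps)
  have c: "(2*(K+2)*(2*K+3)) \<noteq> 0" using a by simp
  have g: "\<And>c N D::rat. c \<noteq> 0 \<Longrightarrow> (c * N) / (c * D) = N / D" by simp
  have n: "(x+1) * ((x + K + 1) * (x + K + 2) * M) - 2 * (x * ((x - K - 1) * (x + K + 1) * M))
     + (x-1) * ((x - K - 2) * (x - K - 1) * M) = (2*(K+2)*(2*K+3)) * (x * M)"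
    by (simp add: algebra_simps)
  have "lhs = ((x+1) * ((x + K + 1) * (x + K + 2) * M) - 2 * (x * ((x - K - 1) * (x + K + 1) * M))
     + (x-1) * ((x - K - 2) * (x - K - 1) * M)) / ((K+2) * ((2*K+3) * (2*K+2) * F))"
    if "lhs = (x+1) * ((x + K + 1) * (x + K + 2) * M) / ((K+2) * ((2*K+3) * (2*K+2) * F))
     - 2 * (x * ((x - K - 1) * (x + K + 1) * M) / ((K+2) * ((2*K+3) * (2*K+2) * F)))
     + (x-1) * ((x - K - 2) * (x - K - 1) * M) / ((K+2) * ((2*K+3) * (2*K+2) * F))" for lhs
    unfolding that by (simp add: add_divide_distrib diff_divide_distrib)
  then show ?thesis unfolding n d using g[OF c] by simp
qed

lemma Q_delta: "Q (Suc k) (x+1) - 2 * Q (Suc k) x + Q (Suc k) (x-1) = Q k x"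
proof -
  define M where "M = pochhammer (x - of_nat k) (2*k+1)"
  have f: "fact (2*k+1) \<noteq> (0::rat)" by simp
  have 1: "Q (Suc k) (x+1) = (x+1) * ((x + of_nat k + 1) * (x + of_nat k + 2) * M) / ((of_nat k+2) * ((2*of_nat k+3) * (2*of_nat k+2) * fact (2*k+1)))"
    unfolding Q_def using poch_facts(2)[of x k] fact_ss[of k] M_def by (simp add: add_ac)
  have 2: "Q (Suc k) x = x * ((x - of_nat k - 1) * (x + of_nat k + 1) * M) / ((of_nat k+2) * ((2*of_nat k+3) * (2*of_nat k+2) * fact (2*k+1)))"
    unfolding Q_def using poch_facts(1)[of x k] fact_ss[of k] M_def by (simp add: add_ac)
  have 3: "Q (Suc k) (x-1) = (x-1) * ((x - of_nat k - 2) * (x - of_nat k - 1) * M) / ((of_nat k+2) * ((2*of_nat k+3) * (2*of_nat k+2) * fact (2*k+1)))"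
    unfolding Q_def using poch_facts(3)[of x k] fact_ss[of k] M_def by (simp add: add_ac)
  have 4: "Q k x = x * M / ((of_nat k+1) * fact (2*k+1))" unfolding Q_def M_def by simp
  show ?thesis unfolding 1 2 3 4 by (rule Q_delta_alg[OF of_nat_0_le_iff f])
qed

lemma Q_mult_alg:
  fixes K F M x :: rat assumes "K \<ge> 0" "F \<noteq> 0"
  shows "x^2 * (x * M / ((K+1) * F)) = (K+1)^2 * (x * M / ((K+1) * F))
    + (2*(K+2)*(2*K+3)) * (x * ((x - K - 1) * (x + K + 1) * M) / ((K+2) * ((2*K+3) * (2*K+2) * F)))"
proof -
  have a: "K+1 \<noteq> 0" "K+2 \<noteq> 0" "2*K+3 \<noteq> 0" using assms by auto
  have e: "(2*(K+2)*(2*K+3)) * (x * ((x - K - 1) * (x + K + 1) * M) / ((K+2) * ((2*K+3) * (2*K+2) * F)))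
     = x * ((x - K - 1) * (x + K + 1) * M) / ((K+1) * F)"
  proof -
    have d: "(K+2) * ((2*K+3) * (2*K+2) * F) = (2*(K+2)*(2*K+3)) * ((K+1)*F)" by (simp add: algebra_simps)
    have c: "(2*(K+2)*(2*K+3)) \<noteq> 0" using a by simp
    have g: "\<And>c N D::rat. c \<noteq> 0 \<Longrightarrow> c * (N / (c * D)) = N / D" by simp
    show ?thesis unfolding d using g[OF c] by simp
  qed
  have "x^2 * (x * M / ((K+1) * F)) = (x^2 * x * M) / ((K+1) * F)" by simp
  also have "\<dots> = ((K+1)^2 * (x * M) + x * ((x - K - 1) * (x + K + 1) * M)) / ((K+1) * F)"
    by (simp add: algebra_simps power2_eq_square)
  also have "\<dots> = (K+1)^2 * (x * M / ((K+1) * F)) + x * ((x - K - 1) * (x + K + 1) * M) / ((K+1) * F)"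
    by (simp add: add_divide_distrib)
  finally show ?thesis using e by simp
qed

lemma Q_mult: "x^2 * Q k x = of_nat ((k+1)^2) * Q k x + of_nat (2*(k+2)*(2*k+3)) * Q (Suc k) x"
proof -
  define M where "M = pochhammer (x - of_nat k) (2*k+1)"
  have f: "fact (2*k+1) \<noteq> (0::rat)" by simp
  have "Q (Suc k) x = x * ((x - of_nat k - 1) * (x + of_nat k + 1) * M) / ((of_nat k+2) * ((2*of_nat k+3) * (2*of_nat k+2) * fact (2*k+1)))"
    unfolding Q_def using poch_facts(1)[of x k] fact_ss[of k] M_def by (simp add: add_ac)
  moreover have "Q k x = x * M / ((of_nat k+1) * fact (2*k+1))" unfolding Q_def M_def by simp
  moreover have "of_nat ((k+1)^2) = (of_nat k + 1::rat)^2" "of_nat (2*(k+2)*(2*k+3)) = (2*(of_nat k+2)*(2*of_nat k+3) :: rat)" by (simp_all add: algebra_simps)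
  ultimately show ?thesis using Q_mult_alg[of "of_nat k" "fact (2*k+1)" x M] f by simp
qed



definition h :: "nat \<Rightarrow> rat" where "h n = S (2*n+1) (n+1) (Q 0)"

lemma S11: "S (Suc 0) (Suc 0) f = f 1 - f 0" by (simp add: S_def)

lemma u_val: "S (2*n+1) (n+1) (Q k) = (if k \<le> n then h (n-k) else 0)"
proof (induction n arbitrary: k)
  case 0
  then show ?case by (cases k) (simp_all add: S11 h_def Q_0 Q_Suc_1)
next
  case (Suc n)
  show ?case
  proof (cases k)
    case 0 then show ?thesis by (simp add: h_def)
  next
    case (Suc k')
    have d: "(\<lambda>x. Q (Suc k') (x+1) - 2 * Q (Suc k') x + Q (Suc k') (x-1)) = Q k'"
      using Q_delta by auto
    have "S (2*Suc n+1) (Suc n+1) (Q (Suc k')) = S (2*n+3) (n+2) (Q (Suc k'))" by (simp add: eval_nat_numeral)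
    also have "\<dots> = S (2*n+1) (n+1) (Q k')"
      using S_rec[of "Q (Suc k')" n] Q_0 Q_Suc_m1 d by simp
    finally show ?thesis using Suc.IH[of k'] \<open>k = Suc k'\<close> by simp
  qed
qed

lemma h0: "h 0 = 1" by (simp add: h_def S11 Q0)

lemma nat1: "(m+1) * (2*m choose (m+1)) = m * (2*m choose m)"
proof -
  have a: "Suc m * (2*m choose Suc m) = (2*m) * ((2*m - 1) choose m)" by (rule binomial_absorption)
  have b: "(2*m - m) * (2*m choose m) = (2*m) * ((2*m - 1) choose m)" by (rule binomial_absorb_comp)
  have "2*m - m = m" by simp
  with a b show ?thesis by (metis Suc_eq_plus1)
qed
lemma nat2: "(m+1) * ((2*m+2) choose (m+1)) = 2*(2*m+1) * (2*m choose m)"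
proof -
  have a: "Suc m * (Suc (2*m+1) choose Suc m) = Suc (2*m+1) * ((2*m+1) choose m)" by (rule Suc_times_binomial)
  have b: "Suc m * (Suc (2*m) choose Suc m) = Suc (2*m) * ((2*m) choose m)" by (rule Suc_times_binomial)
  have c: "(2*m+1) choose (m+1) = (2*m+1) choose m"
    using binomial_symmetric[of "m+1" "2*m+1"] by simp
  have e1: "Suc (2*m+1) = 2*m+2" "Suc m = m+1" "Suc (2*m) = 2*m+1" by simp_all
  have "(m+1) * ((m+1) * ((2*m+2) choose (m+1))) = (m+1) * (2*(2*m+1) * (2*m choose m))"
  proof -
    have "(m+1) * ((m+1) * ((2*m+2) choose (m+1))) = (m+1) * ((2*m+2) * ((2*m+1) choose m))"
      using a unfolding e1 by (simp only:)
    also have "\<dots> = (2*m+2) * ((m+1) * ((2*m+1) choose (m+1)))" unfolding c by (simp only: ac_simps)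
    also have "\<dots> = (2*m+2) * ((2*m+1) * (2*m choose m))" using b unfolding e1 by (simp only:)
    also have "\<dots> = (m+1) * (2*(2*m+1) * (2*m choose m))" by (simp add: algebra_simps)
    finally show ?thesis .
  qed
  then show ?thesis by (subst (asm) mult_left_cancel) simp_all
qed
lemma h_closed: "h (Suc m) * of_nat (m+1) = (-1)^m * of_nat (2*m choose m)"
proof -
  define P where "P = (of_nat (2*m choose (m+1)) :: rat)"
  define B where "B = (of_nat (2*m choose m) :: rat)"
  define M where "M = (of_nat m :: rat)"
  define s where "s = ((-1)^m :: rat)"
  have d: "(\<lambda>x. Q 0 (x+1) - 2 * Q 0 x + Q 0 (x-1)) = (\<lambda>x. 2)"
    by (auto simp: Q0 power2_eq_square algebra_simps)
  have "h (Suc m) = S (2*m+3) (m+2) (Q 0)" by (simp add: h_def eval_nat_numeral)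
  also have "\<dots> = S (Suc (2*m)) (m+1) (\<lambda>x. 2) - (-1)^(m+1) * of_nat ((2*m+1) choose (m+1))"
    using S_rec[of "Q 0" m] Q_0 Q0_m1 d by simp
  finally have e1: "h (Suc m) = S (Suc (2*m)) (m+1) (\<lambda>x. 2) - (-1)^(m+1) * of_nat ((2*m+1) choose (m+1))" .
  have e2: "S (Suc (2*m)) (m+1) (\<lambda>x. 2) = - 2 * s * P" by (simp add: S_const P_def s_def)
  have e3: "(of_nat ((2*m+1) choose (m+1)) :: rat) = P + B" unfolding P_def B_def by simp
  have n1: "(M+1) * P = M * B" unfolding P_def B_def M_def
  proof -
    have "(of_nat ((m+1) * (2*m choose (m+1))) :: rat) = of_nat (m * (2*m choose m))" by (simp only: nat1)
    then show "(of_nat m + 1) * of_nat (2 * m choose (m + 1)) = (of_nat m :: rat) * of_nat (2 * m choose m)"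
      by (simp only: of_nat_mult of_nat_add of_nat_1)
  qed
  have "h (Suc m) * (M+1) = (- 2 * s * P + s * (P + B)) * (M+1)" unfolding e1 e2 e3 s_def by simp
  also have "\<dots> = s * ((M+1) * B - (M+1) * P)" by (simp add: algebra_simps)
  also have "\<dots> = s * B" unfolding n1 by (simp add: algebra_simps)
  finally show ?thesis unfolding s_def B_def M_def by (simp add: add.commute)
qed

definition r :: "nat \<Rightarrow> rat" where "r n = 2 * h n - (if n = 0 then 1 else 0)"

lemma r_rec: "of_nat (n+1) * r (n+1) = (2 - 4 * of_nat n) * r n"
proof (cases n)
  case 0
  then show ?thesis using h_closed[of 0] h0 by (simp add: r_def)
next
  case (Suc m)
  have a: "h (Suc (Suc m)) * of_nat (m+2) = (-1)^(m+1) * of_nat ((2*m+2) choose (m+1))"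
    using h_closed[of "Suc m"] by (simp add: algebra_simps)
  have b: "h (Suc m) * of_nat (m+1) = (-1)^m * of_nat (2*m choose m)" by (rule h_closed)
  define A where "A = (of_nat ((2*m+2) choose (m+1)) :: rat)"
  define B where "B = (of_nat (2*m choose m) :: rat)"
  define M where "M = (of_nat m :: rat)"
  define s where "s = ((-1)^m :: rat)"
  have n2: "(M+1) * A = 2*(2*M+1)*B" unfolding A_def B_def M_def
  proof -
    have "(of_nat ((m+1) * ((2*m+2) choose (m+1))) :: rat) = of_nat (2*(2*m+1) * (2*m choose m))" by (simp only: nat2)
    then show "(of_nat m + 1) * of_nat ((2*m+2) choose (m+1)) = 2*(2*(of_nat m :: rat)+1) * of_nat (2*m choose m)"
      by (simp only: of_nat_mult of_nat_add of_nat_1 of_nat_numeral)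
  qed
  have a': "h (Suc (Suc m)) * (M+2) = - s * A" using a unfolding A_def M_def s_def by (simp add: add_ac)
  have b': "h (Suc m) * (M+1) = s * B" using b unfolding B_def M_def s_def by (simp add: add_ac)
  have r2: "r (m+2) = 2 * h (Suc (Suc m))" "r (m+1) = 2 * h (Suc m)" by (simp_all add: r_def)
  have "(M+1) * ((M+2) * r (m+2)) = (M+1) * ((2 - 4 * (M+1)) * r (m+1))"
  proof -
    have "(M+1) * ((M+2) * r (m+2)) = 2 * (M+1) * (h (Suc (Suc m)) * (M+2))" unfolding r2 by (simp add: algebra_simps)
    also have "\<dots> = - 2 * s * ((M+1) * A)" unfolding a' by (simp add: algebra_simps)
    also have "\<dots> = - 2 * s * (2*(2*M+1)*B)" unfolding n2 ..
    also have "\<dots> = (2 - 4 * (M+1)) * 2 * (h (Suc m) * (M+1))" unfolding b' by (simp add: algebra_simps)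
    also have "\<dots> = (M+1) * ((2 - 4 * (M+1)) * r (m+1))" unfolding r2 by (simp add: algebra_simps)
    finally show ?thesis .
  qed
  then have "(M+2) * r (m+2) = (2 - 4 * (M+1)) * r (m+1)" unfolding M_def by (simp add: add_pos_pos)
  then have "of_nat (m+2) * r (m+2) = (2 - 4 * of_nat (m+1)) * r (m+1)" unfolding M_def by (simp add: add.commute)
  then show ?thesis using Suc by (simp add: add_ac)
qed



lemma R0: "sqrt_1p4z $ 0 = 1" by (simp add: sqrt_1p4z_def)

lemma Rsq: "sqrt_1p4z ^ 2 = 1 + 4 * fps_X"
proof -
  have "(fps_radical (\<lambda>_ _. 1) (Suc 1) (1 + 4 * fps_X :: rat fps)) ^ (Suc 1) = 1 + 4 * fps_X"
    using power_radical[of "1 + 4 * fps_X :: rat fps" "\<lambda>_ _. 1" 1] by simp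
  then show ?thesis by (simp add: sqrt_1p4z_def numeral_2_eq_2)
qed

lemma R_ode: "(1 + 4 * fps_X) * fps_deriv sqrt_1p4z = 2 * sqrt_1p4z"
proof -
  let ?R = sqrt_1p4z
  have "fps_deriv (?R ^ 2) = fps_deriv (1 + 4 * fps_X :: rat fps)" by (simp only: Rsq)
  then have e: "2 * fps_deriv ?R * ?R = 4" by (simp add: fps_deriv_power')
  have "2 * ((1 + 4 * fps_X) * fps_deriv ?R) = 2 * (?R^2 * fps_deriv ?R)" by (simp only: Rsq)
  also have "\<dots> = ?R * (2 * fps_deriv ?R * ?R)"
    by (simp add: power2_eq_square algebra_simps)
  also have "\<dots> = 2 * (2 * ?R)" unfolding e by simp
  finally show ?thesis by (subst (asm) mult_left_cancel) simp_all
qed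

lemma R_coeff: "of_nat (n+1) * sqrt_1p4z $ (n+1) + 4 * of_nat n * sqrt_1p4z $ n = 2 * sqrt_1p4z $ n"
proof -
  have "((1 + 4 * fps_X) * fps_deriv sqrt_1p4z) $ n = (2 * sqrt_1p4z) $ n" by (simp only: R_ode)
  then show ?thesis by (cases n) (simp_all add: algebra_simps fps_deriv_nth numeral_fps_const)
qed


lemma R_r: "sqrt_1p4z $ n = r n"
proof (induction n)
  case 0 then show ?case by (simp add: R0 r_def h0)
next
  case (Suc n)
  have "of_nat (n+1) * sqrt_1p4z $ (n+1) = (2 - 4 * of_nat n) * sqrt_1p4z $ n"
    using R_coeff[of n] by (simp add: algebra_simps)
  also have "\<dots> = of_nat (n+1) * r (n+1)" using Suc r_rec[of n] by simp
  finally show ?case by (subst (asm) mult_left_cancel) simp_all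
qed

lemma H_eq: "fps_const (1/2) * (1 + sqrt_1p4z) = Abs_fps h"
  by (rule fps_ext) (simp add: R_r r_def)

fun cf :: "nat \<Rightarrow> nat \<Rightarrow> int" where
  "cf 0 k = (if k = 0 then 1 else 0)"
| "cf (Suc s) k = int ((k+1)^2) * cf s k + (if k = 0 then 0 else int (2*(k+1)*(2*k+1)) * cf s (k-1))"

lemma cf_zero: "s < k \<Longrightarrow> cf s k = 0"
  by (induction s arbitrary: k) auto

lemma cf_0: "cf s 0 = 1"
  by (induction s) auto

lemma cf_dvd: "k \<ge> 1 \<Longrightarrow> (3::int) dvd cf s k"
proof (induction s arbitrary: k)
  case 0 then show ?case by simp
next
  case (Suc s)
  have a: "3 dvd int ((k+1)^2) * cf s k" using Suc by simp
  have b: "3 dvd int (2*(k+1)*(2*k+1)) * cf s (k-1)"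
  proof (cases "k = 1")
    case True then show ?thesis by simp
  next
    case False then have "k - 1 \<ge> 1" using Suc.prems by simp
    then show ?thesis using Suc.IH by simp
  qed
  show ?case using a b Suc.prems by simp
qed

lemma expand: "x^(2*(s+1)) = (\<Sum>k\<le>s. of_int (cf s k) * Q k x)"
proof (induction s)
  case 0 then show ?case by (simp add: Q0)
next
  case (Suc s)
  have "x^(2*(Suc s+1)) = x^2 * x^(2*(s+1))" by (simp add: power_add[symmetric])
  also have "\<dots> = (\<Sum>k\<le>s. of_int (cf s k) * (x^2 * Q k x))"
    unfolding Suc sum_distrib_left by (simp add: algebra_simps)
  also have "\<dots> = (\<Sum>k\<le>s. of_int (cf s k) * of_nat ((k+1)^2) * Q k x)
      + (\<Sum>k\<le>s. of_int (cf s k) * of_nat (2*(k+2)*(2*k+3)) * Q (Suc k) x)"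
    unfolding Q_mult by (simp add: algebra_simps sum.distrib)
  also have "(\<Sum>k\<le>s. of_int (cf s k) * of_nat ((k+1)^2) * Q k x)
      = (\<Sum>k\<le>Suc s. of_int (int ((k+1)^2) * cf s k) * Q k x)"
    by (simp add: cf_zero algebra_simps)
  also have "(\<Sum>k\<le>s. of_int (cf s k) * of_nat (2*(k+2)*(2*k+3)) * Q (Suc k) x)
      = (\<Sum>k\<le>Suc s. of_int (if k = 0 then 0 else int (2*(k+1)*(2*k+1)) * cf s (k-1)) * Q k x)"
    by (subst sum.atMost_Suc_shift) (simp add: algebra_simps)
  also have "(\<Sum>k\<le>Suc s. of_int (int ((k+1)^2) * cf s k) * Q k x)
     + (\<Sum>k\<le>Suc s. of_int (if k = 0 then 0 else int (2*(k+1)*(2*k+1)) * cf s (k-1)) * Q k x)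
     = (\<Sum>k\<le>Suc s. of_int (cf (Suc s) k) * Q k x)"
    by (simp add: sum.distrib[symmetric] algebra_simps)
  finally show ?case .
qed



lemma lhs_eq: "(of_int (\<Sum>j=0..n+1. (-1) ^ (n + 1 - j) * int ((2*n+1) choose (n+1-j)) * int j ^ (2*s)) :: rat)
   = S (2*n+1) (n+1) (\<lambda>x. x^(2*s))"
proof -
  have "(of_int (\<Sum>j=0..n+1. (-1) ^ (n + 1 - j) * int ((2*n+1) choose (n+1-j)) * int j ^ (2*s)) :: rat)
     = (\<Sum>j=0..n+1. (-1) ^ (n + 1 - j) * of_nat ((2*n+1) choose (n+1-j)) * of_nat j ^ (2*s))"
    by simp
  also have "\<dots> = (\<Sum>m=0..n+1. (-1) ^ m * of_nat ((2*n+1) choose m) * (of_nat (n+1) - of_nat m) ^ (2*s))"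
    apply (subst sum.atLeastAtMost_rev)
    apply (rule sum.cong[OF refl])
    apply (simp add: of_nat_diff)
    done
  also have "\<dots> = S (2*n+1) (n+1) (\<lambda>x. x^(2*s))" unfolding S_def by (simp add: atLeast0AtMost)
  finally show ?thesis .
qed

lemma conv: fixes t n :: nat and c g :: "nat \<Rightarrow> rat" assumes "\<And>k. t < k \<Longrightarrow> c k = 0"
  shows "(\<Sum>k\<le>t. c k * (if k \<le> n then g (n-k) else 0)) = (\<Sum>i=0..n. c i * g (n-i))"
proof -
  have "(\<Sum>k\<le>t. c k * (if k \<le> n then g (n-k) else 0)) = (\<Sum>k\<le>n+t. c k * (if k \<le> n then g (n-k) else 0))"
    by (rule sum.mono_neutral_left) (auto simp: assms)
  also have "\<dots> = (\<Sum>k\<le>n. c k * (if k \<le> n then g (n-k) else 0))"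
    by (rule sum.mono_neutral_right) auto
  also have "\<dots> = (\<Sum>i=0..n. c i * g (n-i))" by (simp add: atLeast0AtMost)
  finally show ?thesis .
qed

theorem proposition18p3:
  fixes s :: nat
  assumes "s \<ge> 1"
  shows "\<exists>p :: int poly.
     (\<forall>i. (3::int) dvd coeff p i) \<and> poly p 0 = 0 \<and>
     Abs_fps (\<lambda>n. of_int (\<Sum>j=0..n+1. (-1) ^ (n + 1 - j) * int ((2*n+1) choose (n+1-j)) * int j ^ (2*s)))
       = fps_const (1/2) * (1 + sqrt_1p4z) * (1 + fps_of_poly (map_poly of_int p) :: rat fps)"
proof -
  define t where "t = s - 1"
  have st: "s = t + 1" using assms by (simp add: t_def)
  define p :: "int poly" where "p = (\<Sum>k\<le>t. monom (cf t k) k) - 1"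
  have cp: "coeff p i = cf t i - (if i = 0 then 1 else 0)" for i
  proof -
    have "coeff (\<Sum>k\<le>t. monom (cf t k) k) i = (\<Sum>k\<le>t. if k = i then cf t k else 0)"
      by (simp add: coeff_sum coeff_monom)
    also have "\<dots> = cf t i" using cf_zero[of t i] by (cases "i \<le> t") auto
    finally show ?thesis by (simp add: p_def)
  qed
  have dv: "\<forall>i. (3::int) dvd coeff p i"
  proof
    fix i show "(3::int) dvd coeff p i"
    proof (cases "i = 0")
      case True then show ?thesis using cp cf_0 by simp
    next
      case False then show ?thesis using cp cf_dvd[of i t] by simp
    qed
  qed
  have p0: "poly p 0 = 0" using cp cf_0 by (simp add: poly_0_coeff_0)
  define G :: "rat fps" where "G = 1 + fps_of_poly (map_poly of_int p)"
  have G: "G $ k = of_int (cf t k)" for k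
    by (simp add: G_def coeff_map_poly cp)
  have "Abs_fps (\<lambda>n. of_int (\<Sum>j=0..n+1. (-1) ^ (n + 1 - j) * int ((2*n+1) choose (n+1-j)) * int j ^ (2*s)))
      = G * Abs_fps h"
  proof (rule fps_ext)
    fix n
    have ex: "(\<lambda>x::rat. x^(2*s)) = (\<lambda>x. \<Sum>k\<le>t. of_int (cf t k) * Q k x)"
      using expand[of _ t] st by auto
    have "Abs_fps (\<lambda>n. of_int (\<Sum>j=0..n+1. (-1) ^ (n + 1 - j) * int ((2*n+1) choose (n+1-j)) * int j ^ (2*s))) $ n
        = S (2*n+1) (n+1) (\<lambda>x. x^(2*s))" using lhs_eq by simp
    also have "\<dots> = (\<Sum>k\<le>t. of_int (cf t k) * (if k \<le> n then h (n-k) else 0))"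
      unfolding ex S_sum[OF finite_atMost] u_val ..
    also have "\<dots> = (\<Sum>i=0..n. of_int (cf t i) * h (n-i))"
      by (rule conv) (simp add: cf_zero)
    also have "\<dots> = (G * Abs_fps h) $ n" by (simp add: fps_mult_nth G)
    finally show "Abs_fps (\<lambda>n. of_int (\<Sum>j=0..n+1. (-1) ^ (n + 1 - j) * int ((2*n+1) choose (n+1-j)) * int j ^ (2*s))) $ n = (G * Abs_fps h) $ n" .
  qed
  also have "\<dots> = fps_const (1/2) * (1 + sqrt_1p4z) * G" unfolding H_eq[symmetric] by (rule mult.commute)
  finally show ?thesis using dv p0 unfolding G_def by blast
qed

end
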